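(* Let $(P,Q)$ be a negative semistandard notched bitableau with at least one box, and let $b$ be the minimum of all entries of $Q$. Then $P$ is semistandard on $b$.
   Context: A notched tableau $P$ is a finite sequence of rows $P_1,\dots,P_r$ (top to bottom), each a left-justified (possibly empty) row of boxes filled with positive integers. It is row strict if entries strictly increase left to right in each row; a row of a row-strict tableau is identified with the set of its entries. A notched bitableau $(P,Q)$ is a pair of notched tableaux of the same shape (same number of rows and same row lengths). For finite multisets $A=\{a_1\le\dots\le a_k\}$, $B=\{b_1\le\dots\le b_k\}$ of positive integers of equal size, $A\le B$ means $a_i\le b_i$ for all $i$, and $A\lessdot B$ means $A,B$ nonempty and $a_i<b_i$ for all $i$. For finite multisets $A,B,C,D$ with $|A|+|D|=|B|+|C|$, "$A-C\le B-D$" means $A\sqcup D\le B\sqcup C$ ($\sqcup$ = multiset union). $(P,Q)$ is semistandard if both are row strict and $P_1-Q_1\le P_2-Q_2\le\cdots\le P_r-Q_r$; it is negative if $P_i\lessdot Q_i$ for all $i$. For a row-strict $P$ and $b\in\mathbb{N}$, $P^{<b}$ is obtained by deleting all entries $\ge b$ (these lie at the right ends of rows); $P$ is semistandard on $b$ if the row lengths of $P^{<b}$ weakly decrease from top to bottom and the entries of $P^{<b}$ weakly increase down each column. *)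

theory Defs
  imports Main "HOL-Library.Multiset"
begin

text \<open>A notched tableau: a list of rows (top to bottom), each row a list of
  positive integers (left to right). Rows may be empty.\<close>
type_synonym tableau = "nat list list"

definition notched_tableau :: "tableau \<Rightarrow> bool" where
  "notched_tableau P \<longleftrightarrow> (\<forall>row \<in> set P. \<forall>x \<in> set row. 0 < x)"

definition same_shape :: "tableau \<Rightarrow> tableau \<Rightarrow> bool" where
  "same_shape P Q \<longleftrightarrow> length P = length Q \<and>
     (\<forall>i < length P. length (P ! i) = length (Q ! i))"

definition row_strict :: "tableau \<Rightarrow> bool" where
  "row_strict P \<longleftrightarrow> (\<forall>row \<in> set P. sorted_wrt (<) row)"

definition mset_le :: "nat multiset \<Rightarrow> nat multiset \<Rightarrow> bool" where
  "mset_le A B \<longleftrightarrow> size A = size B \<and>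
     (\<forall>i < size A. sorted_list_of_multiset A ! i \<le> sorted_list_of_multiset B ! i)"

definition mset_lessdot :: "nat multiset \<Rightarrow> nat multiset \<Rightarrow> bool" where
  "mset_lessdot A B \<longleftrightarrow> A \<noteq> {#} \<and> B \<noteq> {#} \<and> size A = size B \<and>
     (\<forall>i < size A. sorted_list_of_multiset A ! i < sorted_list_of_multiset B ! i)"

text \<open>"A - C \<le> B - D" means A + D \<le> B + C (with |A|+|D| = |B|+|C|).\<close>
definition diff_le :: "nat multiset \<Rightarrow> nat multiset \<Rightarrow> nat multiset \<Rightarrow> nat multiset \<Rightarrow> bool" where
  "diff_le A C B D \<longleftrightarrow> size A + size D = size B + size C \<and> mset_le (A + D) (B + C)"

definition semistandard_bitableau :: "tableau \<Rightarrow> tableau \<Rightarrow> bool" where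
  "semistandard_bitableau P Q \<longleftrightarrow> row_strict P \<and> row_strict Q \<and>
     (\<forall>i. Suc i < length P \<longrightarrow>
        diff_le (mset (P ! i)) (mset (Q ! i)) (mset (P ! Suc i)) (mset (Q ! Suc i)))"

definition negative_bitableau :: "tableau \<Rightarrow> tableau \<Rightarrow> bool" where
  "negative_bitableau P Q \<longleftrightarrow> (\<forall>i < length P. mset_lessdot (mset (P ! i)) (mset (Q ! i)))"

definition restrict_below :: "tableau \<Rightarrow> nat \<Rightarrow> tableau" where
  "restrict_below P b = map (filter (\<lambda>x. x < b)) P"

definition semistandard_on :: "tableau \<Rightarrow> nat \<Rightarrow> bool" where
  "semistandard_on P b \<longleftrightarrow> (let R = restrict_below P b in
     (\<forall>i. Suc i < length R \<longrightarrow> length (R ! Suc i) \<le> length (R ! i)) \<and>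
     (\<forall>i j. Suc i < length R \<longrightarrow> j < length (R ! Suc i) \<longrightarrow> j < length (R ! i) \<longrightarrow>
        R ! i ! j \<le> R ! Suc i ! j))"

definition entries :: "tableau \<Rightarrow> nat set" where
  "entries P = (\<Union>row \<in> set P. set row)"

definition num_boxes :: "tableau \<Rightarrow> nat" where
  "num_boxes P = sum_list (map length P)"

end

theory Submission
  imports Defs
begin

lemma sorted_filter_takeWhile:
  fixes xs :: "nat list"
  assumes "sorted xs"
  shows "filter (\<lambda>x. x < b) xs = takeWhile (\<lambda>x. x < b) xs"
  using assms
proof (induction xs)
  case Nil then show ?case by simp
next
  case (Cons a xs)
  show ?case
  proof (cases "a < b")
    case True then show ?thesis using Cons by simp
  next
    case False
    then have "\<forall>y\<in>set xs. \<not> y < b" using Cons.prems by auto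
    then show ?thesis using False by (simp add: filter_empty_conv)
  qed
qed

lemma key:
  fixes xs ys :: "nat list"
  assumes sx: "sorted xs" and sy: "sorted ys" and len: "length xs = length ys"
    and le: "\<forall>k<length xs. xs!k \<le> ys!k"
  shows "length (filter (\<lambda>x. x<b) ys) \<le> length (filter (\<lambda>x. x<b) xs)"
    and "j < length (filter (\<lambda>x. x<b) ys) \<Longrightarrow> j < length (filter (\<lambda>x. x<b) xs) \<Longrightarrow>
         filter (\<lambda>x. x<b) xs ! j \<le> filter (\<lambda>x. x<b) ys ! j"
proof -
  have fx: "filter (\<lambda>x. x<b) xs = takeWhile (\<lambda>x. x<b) xs" by (rule sorted_filter_takeWhile[OF sx])
  have fy: "filter (\<lambda>x. x<b) ys = takeWhile (\<lambda>x. x<b) ys" by (rule sorted_filter_takeWhile[OF sy])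
  show "length (filter (\<lambda>x. x<b) ys) \<le> length (filter (\<lambda>x. x<b) xs)"
  proof (rule ccontr)
    assume nt: "\<not> length (filter (\<lambda>x. x<b) ys) \<le> length (filter (\<lambda>x. x<b) xs)"
    define k where "k = length (takeWhile (\<lambda>x. x<b) xs)"
    have k1: "k < length (takeWhile (\<lambda>x. x<b) ys)" using nt fx fy k_def by simp
    have "length (takeWhile (\<lambda>x. x<b) ys) \<le> length ys" by (rule length_takeWhile_le)
    then have kx: "k < length xs" using k1 len by simp
    have "\<not> xs ! k < b" using nth_length_takeWhile[of "\<lambda>x. x<b" xs] kx k_def by simp
    moreover have "ys ! k < b" using k1 set_takeWhileD nth_mem
      by (metis takeWhile_nth)
    moreover have "xs ! k \<le> ys ! k" using le kx by simp
    ultimately show False by simp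
  qed
  assume j1: "j < length (filter (\<lambda>x. x<b) ys)" and j2: "j < length (filter (\<lambda>x. x<b) xs)"
  have "filter (\<lambda>x. x<b) xs ! j = xs ! j" using j2 fx by (simp add: takeWhile_nth)
  moreover have "filter (\<lambda>x. x<b) ys ! j = ys ! j" using j1 fy by (simp add: takeWhile_nth)
  moreover have "j < length xs" using j2 by (metis length_filter_le order_less_le_trans)
  ultimately show "filter (\<lambda>x. x<b) xs ! j \<le> filter (\<lambda>x. x<b) ys ! j" using le by simp
qed

lemma filter_split:
  fixes p q :: "nat list"
  assumes "sorted_wrt (<) p" and "\<forall>x\<in>set q. b \<le> x"
  shows "filter (\<lambda>x. x<b) (sorted_list_of_multiset (mset p + mset q)) = filter (\<lambda>x. x<b) p"
proof -
  have "sorted_list_of_multiset (mset p + mset q) = sort (p @ q)"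
    by (metis mset_append sorted_list_of_multiset_mset)
  then have "filter (\<lambda>x. x<b) (sorted_list_of_multiset (mset p + mset q)) = sort (filter (\<lambda>x. x<b) (p @ q))"
    by (simp add: filter_sort)
  also have "filter (\<lambda>x. x<b) (p @ q) = filter (\<lambda>x. x<b) p"
    using assms(2) by (auto simp: filter_empty_conv)
  also have "sort (filter (\<lambda>x. x<b) p) = filter (\<lambda>x. x<b) p"
    using assms(1) by (simp add: sorted_sort_id sorted_wrt_filter strict_sorted_iff)
  finally show ?thesis .
qed

theorem lemma5p2:
  fixes P Q :: tableau
  assumes "notched_tableau P" and "notched_tableau Q"
    and "same_shape P Q"
    and "semistandard_bitableau P Q"
    and "negative_bitableau P Q"
    and "num_boxes P > 0"
  shows "semistandard_on P (Min (entries Q))"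
proof -
  define b where "b = Min (entries Q)"
  have fin: "finite (entries Q)" unfolding entries_def by auto
  have qge: "\<forall>x\<in>set (Q ! i). b \<le> x" if "i < length Q" for i
  proof
    fix x assume "x \<in> set (Q ! i)"
    then have "x \<in> entries Q" unfolding entries_def using that nth_mem by blast
    then show "b \<le> x" using fin b_def by simp
  qed
  have lenPQ: "length P = length Q" using assms(3) unfolding same_shape_def by simp
  have rsP: "\<And>i. i < length P \<Longrightarrow> sorted_wrt (<) (P ! i)"
    using assms(4) unfolding semistandard_bitableau_def row_strict_def by auto
  have main: "length (filter (\<lambda>x. x<b) (P ! Suc i)) \<le> length (filter (\<lambda>x. x<b) (P ! i)) \<and>
     (\<forall>j. j < length (filter (\<lambda>x. x<b) (P ! Suc i)) \<longrightarrow> j < length (filter (\<lambda>x. x<b) (P ! i)) \<longrightarrow>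
        filter (\<lambda>x. x<b) (P ! i) ! j \<le> filter (\<lambda>x. x<b) (P ! Suc i) ! j)"
    if si: "Suc i < length P" for i
  proof -
    have d: "diff_le (mset (P ! i)) (mset (Q ! i)) (mset (P ! Suc i)) (mset (Q ! Suc i))"
      using assms(4) si unfolding semistandard_bitableau_def by blast
    define X where "X = mset (P ! i) + mset (Q ! Suc i)"
    define Y where "Y = mset (P ! Suc i) + mset (Q ! i)"
    have ml: "mset_le X Y" using d unfolding diff_le_def X_def Y_def by simp
    have lsl: "\<And>M::nat multiset. length (sorted_list_of_multiset M) = size M"
      by (metis mset_sorted_list_of_multiset size_mset)
    define xs where "xs = sorted_list_of_multiset X"
    define ys where "ys = sorted_list_of_multiset Y"
    have l: "length xs = length ys" using ml unfolding mset_le_def xs_def ys_def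
      by (simp add: lsl)
    have le: "\<forall>k<length xs. xs!k \<le> ys!k" using ml unfolding mset_le_def xs_def ys_def
      by (simp add: lsl)
    have e1: "filter (\<lambda>x. x<b) xs = filter (\<lambda>x. x<b) (P ! i)"
      unfolding xs_def X_def using filter_split[OF rsP qge, of i "Suc i"] si lenPQ by simp
    have e2: "filter (\<lambda>x. x<b) ys = filter (\<lambda>x. x<b) (P ! Suc i)"
      unfolding ys_def Y_def using filter_split[OF rsP qge, of "Suc i" i] si lenPQ by simp
    have sx: "sorted xs" and sy: "sorted ys" unfolding xs_def ys_def by simp_all
    have A: "length (filter (\<lambda>x. x<b) (P ! Suc i)) \<le> length (filter (\<lambda>x. x<b) (P ! i))"
      using key(1)[OF sx sy l le, of b] unfolding e1 e2 .
    have B: "\<forall>j. j < length (filter (\<lambda>x. x<b) (P ! Suc i)) \<longrightarrow> j < length (filter (\<lambda>x. x<b) (P ! i)) \<longrightarrow>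
        filter (\<lambda>x. x<b) (P ! i) ! j \<le> filter (\<lambda>x. x<b) (P ! Suc i) ! j"
      using key(2)[OF sx sy l le, of _ b] unfolding e1 e2 by blast
    show ?thesis using A B by blast
  qed
  show ?thesis
    unfolding semistandard_on_def Let_def restrict_below_def b_def[symmetric]
  proof (intro conjI allI impI)
    fix i assume "Suc i < length (map (filter (\<lambda>x. x < b)) P)"
    then show "length (map (filter (\<lambda>x. x < b)) P ! Suc i) \<le> length (map (filter (\<lambda>x. x < b)) P ! i)"
      using main[of i] by simp
  next
    fix i j assume "Suc i < length (map (filter (\<lambda>x. x < b)) P)"
      "j < length (map (filter (\<lambda>x. x < b)) P ! Suc i)" "j < length (map (filter (\<lambda>x. x < b)) P ! i)"
    then show "map (filter (\<lambda>x. x < b)) P ! i ! j \<le> map (filter (\<lambda>x. x < b)) P ! Suc i ! j"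
      using main[of i] by simp
  qed
qed

end
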